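(* Let $c\in\mathbb{F}_4$ satisfy $c^2+c+1=0$ and let $L(x)=x^4+cx$. Then $L$ is a bijection of $\mathbb{F}_{4^n}$ if and only if $3\nmid n$. Consequently, the function $F(x)=x^{12}+cx^3=L(x^3)$ is APN on $\mathbb{F}_{4^n}$ for every positive integer $n$ not divisible by $3$.
   Context: A function $f:K\to K$ on a finite field $K$ of characteristic $2$ is almost perfect nonlinear (APN) on $K$ if for all $a,b\in K$ with $a\ne0$ the equation $f(x+a)+f(x)=b$ has at most $2$ solutions $x\in K$. *)

theory Defs
  imports Main
begin

definition APN :: "('a::{field,finite} \<Rightarrow> 'a) \<Rightarrow> bool" where
  "APN f \<longleftrightarrow> (\<forall>a b. a \<noteq> 0 \<longrightarrow> card {x. f (x + a) + f x = b} \<le> 2)"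

end

theory Submission
  imports Defs "HOL-Number_Theory.Residues" "HOL-Computational_Algebra.Polynomial"
begin

lemma root_card_bound:
  fixes a :: "'a::field"
  assumes "m > 0"
  shows "card {x. x ^ m = a} \<le> m"
proof -
  define p where "p = monom (1::'a) m + [:-a:]"
  have dp: "degree p = m" unfolding p_def using assms
    by (subst degree_add_eq_left) (auto simp: degree_monom_eq)
  hence "p \<noteq> 0" using assms by auto
  have "{x. x ^ m = a} = {x. poly p x = 0}" by (auto simp: p_def poly_monom)
  thus ?thesis using card_poly_roots_bound[OF \<open>p \<noteq> 0\<close>] dp by simp
qed

lemma fermat_ff:
  fixes x :: "'a::{field,finite}"
  assumes "x \<noteq> 0"
  shows "x ^ (card (UNIV :: 'a set) - 1) = 1"
proof -
  have "(\<Prod>y\<in>UNIV-{0}. x * y) = x ^ card (UNIV-{0::'a}) * \<Prod>(UNIV-{0::'a})"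
    by (simp add: prod.distrib)
  moreover have "card (UNIV-{0::'a}) = card (UNIV :: 'a set) - 1"
    by (simp add: card_Diff_singleton)
  moreover have "(\<Prod>y\<in>UNIV-{0}. x * y) = (\<Prod>y\<in>UNIV-{0}. y)"
    by (rule prod.reindex_bij_witness[of _ "\<lambda>y. y / x" "\<lambda>y. x * y"]) (use assms in auto)
  moreover have "\<Prod>(UNIV-{0::'a}) \<noteq> 0" by simp
  ultimately show ?thesis by simp
qed

lemma char2:
  assumes "n > 0" and "card (UNIV :: 'a::{field,finite} set) = 4 ^ n"
  shows "(2::'a) = 0"
proof -
  have pos: "CHAR('a) > 0" by (simp add: finite_imp_CHAR_pos)
  hence pr: "prime CHAR('a)" using prime_CHAR_semidom by blast
  have "CHAR('a) dvd 2 ^ (2*n)" using CHAR_dvd_CARD[where 'a='a] assms(2)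
    by (simp add: power_mult)
  hence "CHAR('a) dvd 2" using pr prime_dvd_power by blast
  hence "CHAR('a) = 2" using pr
    using primes_dvd_imp_eq two_is_prime_nat by blast
  thus ?thesis using of_nat_CHAR[where 'a='a] by simp
qed

lemma char2_neg:
  fixes t :: "'a::field"
  assumes "(2::'a) = 0"
  shows "-t = t"
proof -
  have "t + t = 2 * t" by simp
  hence "t + t = 0" using assms by simp
  thus ?thesis by (metis add_eq_0_iff)
qed

lemma L_add:
  fixes u v c :: "'a::field"
  assumes "(2::'a) = 0"
  shows "(u+v)^4 + c*(u+v) = (u^4 + c*u) + (v^4 + c*v)"
proof -
  have "(u+v)^4 + c*(u+v) = (u^4 + c*u) + (v^4 + c*v) + 2*(2*u^3*v+3*u^2*v^2+2*u*v^3)"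
    by (simp add: algebra_simps power2_eq_square power3_eq_cube power4_eq_xxxx)
  thus ?thesis using assms by simp
qed

lemma cube_exists:
  fixes c :: "'a::{field,finite}"
  assumes "9 dvd card (UNIV :: 'a set) - 1" and "c ^ 3 = 1"
  shows "\<exists>x. x \<noteq> 0 \<and> x ^ 3 = c"
proof -
  define q where "q = card (UNIV :: 'a set)"
  define m where "m = (q - 1) div 3"
  have m3: "q - 1 = 3 * m" using assms(1) unfolding m_def q_def by auto
  have mpos: "m > 0"
  proof -
    have "card {0::'a, 1} \<le> q" unfolding q_def by (rule card_mono) auto
    hence "q \<ge> 2" by simp
    thus ?thesis using m3 by simp
  qed
  define S where "S = (UNIV - {0::'a})"
  define T where "T = (\<lambda>x. x ^ 3) ` S"
  define R where "R = {y::'a. y ^ m = 1}"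
  have TR: "T \<subseteq> R"
  proof
    fix y assume "y \<in> T"
    then obtain x where x: "x \<noteq> 0" "y = x ^ 3" unfolding T_def S_def by auto
    have "y ^ m = x ^ (q - 1)" using x m3 by (simp add: power_mult[symmetric])
    also have "\<dots> = 1" using fermat_ff[OF x(1)] q_def by simp
    finally show "y \<in> R" unfolding R_def by simp
  qed
  have "S \<subseteq> (\<Union>y\<in>T. {x. x ^ 3 = y})" unfolding T_def by auto
  hence "card S \<le> card (\<Union>y\<in>T. {x. x ^ 3 = y})" by (intro card_mono) auto
  also have "\<dots> \<le> (\<Sum>y\<in>T. card {x. x ^ 3 = y})" by (rule card_UN_le) auto
  also have "\<dots> \<le> (\<Sum>y\<in>T. 3)" by (intro sum_mono root_card_bound) auto
  also have "\<dots> = 3 * card T" by simp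
  finally have "card S \<le> 3 * card T" .
  moreover have "card S = q - 1" unfolding S_def q_def by (simp add: card_Diff_singleton)
  ultimately have "m \<le> card T" using m3 by simp
  moreover have "card R \<le> m" unfolding R_def using root_card_bound[OF mpos] .
  ultimately have "card T = card R" using card_mono[OF _ TR] by simp
  hence "T = R" using TR by (intro card_subset_eq) auto
  moreover have "c \<in> R"
  proof -
    have "9 dvd 3 * m" using assms(1) m3 q_def by simp
    then obtain k where "m = 3 * k" by auto
    thus ?thesis unfolding R_def using assms(2) by (simp add: power_mult)
  qed
  ultimately have "c \<in> T" by simp
  thus ?thesis unfolding T_def S_def by auto
qed

lemma pow4_mod9:
  assumes "\<not> 3 dvd n"
  shows "(4::nat) ^ n mod 9 = 4 \<or> (4::nat) ^ n mod 9 = 7"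
proof -
  define k where "k = n div 3"
  define r where "r = n mod 3"
  have n: "n = 3 * k + r" unfolding k_def r_def by simp
  have r: "r = 1 \<or> r = 2" using assms unfolding r_def by presburger
  have "(4::nat) ^ n = 64 ^ k * 4 ^ r" by (simp add: n power_add power_mult)
  hence "(4::nat) ^ n mod 9 = ((64 ^ k mod 9) * 4 ^ r) mod 9" by (simp add: mod_mult_left_eq)
  moreover have "(64::nat) ^ k mod 9 = 1" by (subst power_mod[symmetric]) simp
  ultimately show ?thesis using r by auto
qed

lemma pow4_mod9':
  assumes "3 dvd n"
  shows "9 dvd (4::nat) ^ n - 1"
proof -
  obtain k where n: "n = 3 * k" using assms by auto
  have "(4::nat) ^ n = 64 ^ k" by (simp add: n power_mult)
  moreover have "(64::nat) ^ k mod 9 = 1" by (subst power_mod[symmetric]) simp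
  ultimately have "(4::nat) ^ n mod 9 = 1 mod 9" by simp
  thus ?thesis by (subst mod_eq_dvd_iff_nat[symmetric]) auto
qed

lemma cube_one:
  fixes z :: "'a::field"
  assumes "z ^ 9 = 1" "z ^ (4 ^ n - 1) = 1" "\<not> 3 dvd n"
  shows "z ^ 3 = 1"
proof -
  have z0: "z \<noteq> 0" using assms(1) by auto
  define r where "r = (4::nat) ^ n mod 9"
  have "(4::nat) ^ n = 9 * (4 ^ n div 9) + r" unfolding r_def by simp
  have "r = 4 \<or> r = 7" using pow4_mod9[OF assms(3)] r_def by simp
  hence "(4::nat) ^ n - 1 = 9 * (4 ^ n div 9) + (r - 1)"
    using \<open>(4::nat) ^ n = 9 * (4 ^ n div 9) + r\<close> by auto
  hence zr: "z ^ (r - 1) = 1" using assms(1,2) by (simp add: power_add power_mult)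
  show ?thesis
  proof (cases "r = 4")
    case True then show ?thesis using zr by simp
  next
    case False
    hence "r - 1 = 6" using \<open>r = 4 \<or> r = 7\<close> by simp
    hence z6: "z ^ 6 = 1" using zr by simp
    have "z ^ 9 = z ^ 3 * z ^ 6" by (simp flip: power_add)
    thus ?thesis using z6 assms(1) by simp
  qed
qed


theorem mainTheorem6:
  fixes c :: "'a::{field,finite}" and n :: nat
  assumes "n > 0"
    and "card (UNIV :: 'a set) = 4 ^ n"
    and "c ^ 2 + c + 1 = 0"
  shows "(bij (\<lambda>x::'a. x ^ 4 + c * x) \<longleftrightarrow> \<not> (3 dvd n))
         \<and> (\<not> (3 dvd n) \<longrightarrow> APN (\<lambda>x::'a. x ^ 12 + c * x ^ 3))"
proof -
  define L where "L = (\<lambda>x::'a. x ^ 4 + c * x)"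
  have two: "(2::'a) = 0" using char2[OF assms(1,2)] .
  have neg: "\<And>t::'a. -t = t" using char2_neg[OF two] .
  have Ladd: "\<And>u v. L (u + v) = L u + L v" unfolding L_def using L_add[OF two] by simp
  have c3: "c ^ 3 = 1"
  proof -
    have "c ^ 3 - 1 = (c - 1) * (c ^ 2 + c + 1)"
      by (simp add: algebra_simps power2_eq_square power3_eq_cube)
    thus ?thesis using assms(3) by simp
  qed
  have c1: "c \<noteq> 1"
  proof
    assume "c = 1"
    hence "(1::'a) + 2 = 0" using assms(3) by simp
    thus False using two by simp
  qed
  have inj_iff: "inj L" if n3: "\<not> 3 dvd n"
  proof (rule injI)
    fix x y assume "L x = L y"
    hence Lz: "L (x + y) = 0" using Ladd[of x y] two by (simp flip: mult_2)
    show "x = y"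
    proof (rule ccontr)
      assume "x \<noteq> y"
      define z where "z = x + y"
      have z0: "z \<noteq> 0" unfolding z_def proof
        assume "x + y = 0"
        hence "x = - y" by (simp add: eq_neg_iff_add_eq_0)
        thus False using neg[of y] \<open>x \<noteq> y\<close> by simp
      qed
      have "z * (z ^ 3 + c) = 0" using Lz unfolding L_def z_def
        by (simp add: algebra_simps power3_eq_cube power4_eq_xxxx)
      hence "z ^ 3 + c = 0" using z0 by simp
      hence z3: "z ^ 3 = c" using neg[of c] by (simp add: add_eq_0_iff)
      have "z ^ 9 = 1" proof -
        have "z ^ 9 = (z ^ 3) ^ 3" by (simp flip: power_mult)
        thus ?thesis using c3 z3 by simp
      qed
      moreover have "z ^ (4 ^ n - 1) = 1" using fermat_ff[OF z0] assms(2) by simp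
      ultimately have "z ^ 3 = 1" using cube_one n3 by blast
      thus False using z3 c1 by simp
    qed
  qed
  have part1: "bij L \<longleftrightarrow> \<not> 3 dvd n"
  proof
    assume "bij L"
    show "\<not> 3 dvd n"
    proof
      assume "3 dvd n"
      hence "9 dvd card (UNIV :: 'a set) - 1" using pow4_mod9' assms(2) by simp
      then obtain x where x: "x \<noteq> 0" "x ^ 3 = c" using cube_exists c3 by blast
      have "L x = x * (x ^ 3 + c)" unfolding L_def by (simp add: algebra_simps power3_eq_cube power4_eq_xxxx)
      also have "\<dots> = 0" using x(2) neg[of c] by (simp add: add_eq_0_iff)
      finally have "L x = L 0" unfolding L_def by simp
      thus False using \<open>bij L\<close> x(1) by (metis bij_pointE)
    qed
  next
    assume "\<not> 3 dvd n"
    hence "inj L" by (rule inj_iff)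
    thus "bij L" by (simp add: bij_def finite_UNIV_inj_surj)
  qed
  have part2: "APN (\<lambda>x::'a. x ^ 12 + c * x ^ 3)" if n3: "\<not> 3 dvd n"
    unfolding APN_def
  proof (intro allI impI)
    fix a b :: 'a assume a0: "a \<noteq> 0"
    have iL: "inj L" using inj_iff[OF n3] .
    have F: "\<And>x. x ^ 12 + c * x ^ 3 = L (x ^ 3)" unfolding L_def by (simp flip: power_mult)
    define A where "A = {x. (x + a) ^ 12 + c * (x + a) ^ 3 + (x ^ 12 + c * x ^ 3) = b}"
    have key: "\<And>x. (x + a) ^ 12 + c * (x + a) ^ 3 + (x ^ 12 + c * x ^ 3) = L (a * x ^ 2 + a ^ 2 * x + a ^ 3)"
    proof -
      fix x :: 'a
      have "(x + a) ^ 3 + x ^ 3 = a * x ^ 2 + a ^ 2 * x + a ^ 3 + 2 * (x ^ 3 + a * x ^ 2 + a ^ 2 * x)"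
        by (simp add: algebra_simps power2_eq_square power3_eq_cube)
      hence "(x + a) ^ 3 + x ^ 3 = a * x ^ 2 + a ^ 2 * x + a ^ 3" using two by simp
      thus "(x + a) ^ 12 + c * (x + a) ^ 3 + (x ^ 12 + c * x ^ 3) = L (a * x ^ 2 + a ^ 2 * x + a ^ 3)"
        using Ladd[of "(x + a) ^ 3" "x ^ 3"] F by simp
    qed
    show "card {x. (x + a) ^ 12 + c * (x + a) ^ 3 + (x ^ 12 + c * x ^ 3) = b} \<le> 2"
    proof (cases "A = {}")
      case True thus ?thesis unfolding A_def by simp
    next
      case False
      then obtain x0 where x0: "x0 \<in> A" by auto
      have "A \<subseteq> {x0, x0 + a}"
      proof
        fix y assume "y \<in> A"
        hence "L (a * y ^ 2 + a ^ 2 * y + a ^ 3) = L (a * x0 ^ 2 + a ^ 2 * x0 + a ^ 3)"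
          using x0 key unfolding A_def by simp
        hence e: "a * y ^ 2 + a ^ 2 * y = a * x0 ^ 2 + a ^ 2 * x0" using iL by (auto dest: injD)
        have "a * (y + x0) * (y + x0 + a) = (a * y ^ 2 + a ^ 2 * y) - (a * x0 ^ 2 + a ^ 2 * x0)
               + 2 * (a * x0 ^ 2 + a ^ 2 * x0 + a * y * x0)"
          by (simp add: algebra_simps power2_eq_square)
        hence "a * (y + x0) * (y + x0 + a) = 0" using e two by simp
        hence "y + x0 = 0 \<or> y + x0 + a = 0" using a0 by simp
        moreover have "y + x0 = 0 \<Longrightarrow> y = - x0" by (simp add: eq_neg_iff_add_eq_0)
        moreover have "y + x0 + a = 0 \<Longrightarrow> y = - (x0 + a)"
          by (simp only: eq_neg_iff_add_eq_0 add.assoc)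
        ultimately have "y = - x0 \<or> y = - (x0 + a)" by blast
        moreover have n1: "- x0 = x0" by (rule neg)
        moreover have n2: "- (x0 + a) = x0 + a" by (rule neg)
        ultimately have "y = x0 \<or> y = x0 + a" by (simp only: n1 n2)
        thus "y \<in> {x0, x0 + a}" by simp
      qed
      hence "card A \<le> card {x0, x0 + a}" by (intro card_mono) auto
      also have "\<dots> \<le> 2" by (simp add: card_insert_if)
      finally show ?thesis unfolding A_def .
    qed
  qed
  show ?thesis using part1 part2 unfolding L_def by blast
qed

end
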